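(* Let $\mathcal F\subset 2^{\mathbb N}$ be a Furstenberg family, let $X_1,X_2$ be Polish topological vector spaces, and let $T_1\in\mathfrak L(X_1)$, $T_2\in\mathfrak L(X_2)$. If $T_1$ is $\mathcal F$-hypercyclic and $T_2$ is hereditarily $\mathcal F$-hypercyclic, then $T_1\oplus T_2$ is $\mathcal F$-hypercyclic on $X_1\times X_2$. If both $T_1$ and $T_2$ are hereditarily $\mathcal F$-hypercyclic, then $T_1\oplus T_2$ is hereditarily $\mathcal F$-hypercyclic.
   Context: A Furstenberg family is a family of non-empty subsets of $\mathbb N$ which is hereditary upwards ($A\in\mathcal F$, $A\subset A'$ implies $A'\in\mathcal F$). $\mathcal N_T(x,V):=\{n\in\mathbb N:T^nx\in V\}$. $T$ is $\mathcal F$-hypercyclic if there is $x$ with $\mathcal N_T(x,V)\in\mathcal F$ for every non-empty open $V$. $T$ is hereditarily $\mathcal F$-hypercyclic if for every countable family $(V_i)_{i\in I}$ of non-empty open sets and every family $(A_i)_{i\in I}\subset\mathcal F$, there is $x$ with $\mathcal N_T(x,V_i)\cap A_i\in\mathcal F$ for all $i\in I$. *)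

theory Defs
  imports "HOL-Analysis.Analysis"
begin

definition furstenberg_family :: "nat set set \<Rightarrow> bool" where
  "furstenberg_family F \<longleftrightarrow>
     (\<forall>A\<in>F. A \<noteq> {}) \<and> (\<forall>A B. A \<in> F \<longrightarrow> A \<subseteq> B \<longrightarrow> B \<in> F)"

definition return_set :: "('a \<Rightarrow> 'a) \<Rightarrow> 'a \<Rightarrow> 'a set \<Rightarrow> nat set" where
  "return_set T x V = {n. (T ^^ n) x \<in> V}"

definition F_hypercyclic :: "nat set set \<Rightarrow> ('a::topological_space \<Rightarrow> 'a) \<Rightarrow> bool" where
  "F_hypercyclic F T \<longleftrightarrow>
     (\<exists>x. \<forall>V. open V \<and> V \<noteq> {} \<longrightarrow> return_set T x V \<in> F)"

text \<open>Countable index families are indexed by subsets of nat (no loss of generality).\<close>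
definition hereditarily_F_hypercyclic :: "nat set set \<Rightarrow> ('a::topological_space \<Rightarrow> 'a) \<Rightarrow> bool" where
  "hereditarily_F_hypercyclic F T \<longleftrightarrow>
     (\<forall>(I::nat set) (V::nat \<Rightarrow> 'a set) (A::nat \<Rightarrow> nat set).
        (\<forall>i\<in>I. open (V i) \<and> V i \<noteq> {} \<and> A i \<in> F) \<longrightarrow>
        (\<exists>x. \<forall>i\<in>I. return_set T x (V i) \<inter> A i \<in> F))"

definition polish_tvs :: "('a::{real_vector, polish_space}) itself \<Rightarrow> bool" where
  "polish_tvs _ \<longleftrightarrow>
     continuous_on UNIV (\<lambda>p::'a \<times> 'a. fst p + snd p) \<and>
     continuous_on UNIV (\<lambda>p::real \<times> 'a. fst p *\<^sub>R snd p)"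

definition bounded_operator :: "('a::{real_vector, topological_space} \<Rightarrow> 'a) \<Rightarrow> bool" where
  "bounded_operator T \<longleftrightarrow> linear T \<and> continuous_on UNIV T"

definition direct_sum :: "('a \<Rightarrow> 'a) \<Rightarrow> ('b \<Rightarrow> 'b) \<Rightarrow> ('a \<times> 'b \<Rightarrow> 'a \<times> 'b)" where
  "direct_sum T1 T2 = (\<lambda>(x, y). (T1 x, T2 y))"

end

theory Submission
  imports Defs
begin

lemma ds_iter: "(direct_sum T1 T2 ^^ n) (x, y) = ((T1 ^^ n) x, (T2 ^^ n) y)"
  by (induction n) (auto simp: direct_sum_def)

lemma ds_return:
  assumes "U \<times> W \<subseteq> V"
  shows "return_set T1 x U \<inter> return_set T2 y W \<subseteq> return_set (direct_sum T1 T2) (x, y) V"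
  using assms by (auto simp: return_set_def ds_iter)

lemma basic_sub:
  fixes V :: "('a::topological_space \<times> 'b::topological_space) set"
  assumes "open V" "V \<noteq> {}"
  obtains U W where "open U" "open W" "U \<noteq> {}" "W \<noteq> {}" "U \<times> W \<subseteq> V"
proof -
  from assms obtain p where "p \<in> V" by auto
  then obtain U W where "open U" "open W" "p \<in> U \<times> W" "U \<times> W \<subseteq> V"
    using open_prod_elim assms(1) by metis
  then show ?thesis using that by auto
qed

lemma part2:
  fixes T1 :: "'a::topological_space \<Rightarrow> 'a" and T2 :: "'b::topological_space \<Rightarrow> 'b"
  assumes ff: "furstenberg_family F"
    and h1: "hereditarily_F_hypercyclic F T1" and h2: "hereditarily_F_hypercyclic F T2"
  shows "hereditarily_F_hypercyclic F (direct_sum T1 T2)"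
  unfolding hereditarily_F_hypercyclic_def
proof (intro allI impI)
  fix I :: "nat set" and V :: "nat \<Rightarrow> ('a \<times> 'b) set" and A
  assume H: "\<forall>i\<in>I. open (V i) \<and> V i \<noteq> {} \<and> A i \<in> F"
  have "\<forall>i. \<exists>UW. i \<in> I \<longrightarrow> (open (fst UW) \<and> open (snd UW) \<and> fst UW \<noteq> {} \<and> snd UW \<noteq> {} \<and> fst UW \<times> snd UW \<subseteq> V i)"
  proof
    fix i show "\<exists>UW. i \<in> I \<longrightarrow> (open (fst UW) \<and> open (snd UW) \<and> fst UW \<noteq> {} \<and> snd UW \<noteq> {} \<and> fst UW \<times> snd UW \<subseteq> V i)"
    proof (cases "i \<in> I")
      case True
      have "open (V i)" "V i \<noteq> {}" using H True by auto
      then obtain U W where "open U" "open W" "U \<noteq> {}" "W \<noteq> {}" "U \<times> W \<subseteq> V i"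
        by (rule basic_sub)
      then show ?thesis by (intro exI[of _ "(U,W)"]) auto
    next
      case False then show ?thesis by simp
    qed
  qed
  then obtain UW where UW0: "\<forall>i. i \<in> I \<longrightarrow> open (fst (UW i)) \<and> open (snd (UW i)) \<and> fst (UW i) \<noteq> {} \<and> snd (UW i) \<noteq> {} \<and> fst (UW i) \<times> snd (UW i) \<subseteq> V i"
    by (rule choice[THEN exE])
  then have UW: "\<And>i. i \<in> I \<Longrightarrow> open (fst (UW i)) \<and> open (snd (UW i)) \<and> fst (UW i) \<noteq> {} \<and> snd (UW i) \<noteq> {} \<and> fst (UW i) \<times> snd (UW i) \<subseteq> V i"
    by blast
  obtain x where x: "\<forall>i\<in>I. return_set T1 x (fst (UW i)) \<inter> A i \<in> F"
  proof -
    have "\<forall>i\<in>I. open (fst (UW i)) \<and> fst (UW i) \<noteq> {} \<and> A i \<in> F" using H UW by blast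
    then show ?thesis using that h1[unfolded hereditarily_F_hypercyclic_def, rule_format, of I "\<lambda>i. fst (UW i)" A]
      by blast
  qed
  obtain y where y: "\<forall>i\<in>I. return_set T2 y (snd (UW i)) \<inter> (return_set T1 x (fst (UW i)) \<inter> A i) \<in> F"
  proof -
    have "\<forall>i\<in>I. open (snd (UW i)) \<and> snd (UW i) \<noteq> {} \<and> return_set T1 x (fst (UW i)) \<inter> A i \<in> F" using x UW by blast
    then show ?thesis using that h2[unfolded hereditarily_F_hypercyclic_def, rule_format, of I "\<lambda>i. snd (UW i)" "\<lambda>i. return_set T1 x (fst (UW i)) \<inter> A i"]
      by blast
  qed
  show "\<exists>z. \<forall>i\<in>I. return_set (direct_sum T1 T2) z (V i) \<inter> A i \<in> F"
  proof (intro exI[of _ "(x,y)"] ballI)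
    fix i assume i: "i \<in> I"
    have "return_set T2 y (snd (UW i)) \<inter> (return_set T1 x (fst (UW i)) \<inter> A i)
       \<subseteq> return_set (direct_sum T1 T2) (x,y) (V i) \<inter> A i"
      using ds_return[OF UW[OF i, THEN conjunct2, THEN conjunct2, THEN conjunct2, THEN conjunct2], of T1 x T2 y]
      by auto
    then show "return_set (direct_sum T1 T2) (x,y) (V i) \<inter> A i \<in> F"
      using y i ff unfolding furstenberg_family_def by blast
  qed
qed

lemma part1:
  fixes T1 :: "'a::{topological_space,second_countable_topology} \<Rightarrow> 'a"
    and T2 :: "'b::{topological_space,second_countable_topology} \<Rightarrow> 'b"
  assumes ff: "furstenberg_family F"
    and h1: "F_hypercyclic F T1" and h2: "hereditarily_F_hypercyclic F T2"
  shows "F_hypercyclic F (direct_sum T1 T2)"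
proof -
  obtain x where x: "\<And>V. open V \<Longrightarrow> V \<noteq> {} \<Longrightarrow> return_set T1 x V \<in> F"
    using h1 unfolding F_hypercyclic_def by blast
  obtain B1 :: "'a set set" where B1: "countable B1" "topological_basis B1"
    using ex_countable_basis by blast
  obtain B2 :: "'b set set" where B2: "countable B2" "topological_basis B2"
    using ex_countable_basis by blast
  define P where "P = {(U,W). U \<in> B1 \<and> W \<in> B2 \<and> U \<noteq> {} \<and> W \<noteq> {}}"
  have cP: "countable P"
  proof -
    have "P \<subseteq> B1 \<times> B2" by (auto simp: P_def)
    moreover have "countable (B1 \<times> B2)" using B1(1) B2(1) by simp
    ultimately show ?thesis by (rule countable_subset)
  qed
  have sub: "\<exists>p\<in>P. fst p \<times> snd p \<subseteq> V" if oV: "open V" and nV: "V \<noteq> {}" for V :: "('a\<times>'b) set"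
  proof -
    from nV obtain p where pV: "p \<in> V" by auto
    obtain U W where UW: "open U" "open W" "p \<in> U \<times> W" "U \<times> W \<subseteq> V"
      by (rule open_prod_elim[OF oV pV])
    have "fst p \<in> U" "snd p \<in> W" using UW(3) by auto
    obtain U' where "U' \<in> B1" "fst p \<in> U'" "U' \<subseteq> U"
      by (rule topological_basisE[OF B1(2) UW(1) \<open>fst p \<in> U\<close>])
    moreover obtain W' where "W' \<in> B2" "snd p \<in> W'" "W' \<subseteq> W"
      by (rule topological_basisE[OF B2(2) UW(2) \<open>snd p \<in> W\<close>])
    ultimately show ?thesis using UW(4) unfolding P_def
      by (intro bexI[of _ "(U',W')"]) auto
  qed
  have Pne: "P \<noteq> {}"
    using sub[of UNIV] by auto
  define e where "e = from_nat_into P"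
  have re: "range e = P" using Pne cP by (simp add: e_def)
  have eP: "\<And>i. fst (e i) \<in> B1 \<and> snd (e i) \<in> B2 \<and> fst (e i) \<noteq> {} \<and> snd (e i) \<noteq> {}"
  proof -
    fix i have "e i \<in> P" using re by blast
    then show "fst (e i) \<in> B1 \<and> snd (e i) \<in> B2 \<and> fst (e i) \<noteq> {} \<and> snd (e i) \<noteq> {}"
      unfolding P_def by (cases "e i") auto
  qed
  have "\<forall>i\<in>UNIV. open (snd (e i)) \<and> snd (e i) \<noteq> {} \<and> return_set T1 x (fst (e i)) \<in> F"
  proof
    fix i :: nat
    have "open (fst (e i))" "open (snd (e i))"
      using eP[of i] topological_basis_open[OF B1(2)] topological_basis_open[OF B2(2)] by auto
    then show "open (snd (e i)) \<and> snd (e i) \<noteq> {} \<and> return_set T1 x (fst (e i)) \<in> F"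
      using eP[of i] x by auto
  qed
  then obtain y where y: "\<forall>i\<in>UNIV. return_set T2 y (snd (e i)) \<inter> return_set T1 x (fst (e i)) \<in> F"
    using h2[unfolded hereditarily_F_hypercyclic_def, rule_format, of UNIV "\<lambda>i. snd (e i)" "\<lambda>i. return_set T1 x (fst (e i))"] by blast
  show ?thesis unfolding F_hypercyclic_def
  proof (intro exI[of _ "(x,y)"] allI impI)
    fix V :: "('a\<times>'b) set" assume "open V \<and> V \<noteq> {}"
    then obtain p where "p \<in> P" "fst p \<times> snd p \<subseteq> V" using sub by blast
    then obtain i where "e i = p" using re by blast
    then have "return_set T2 y (snd (e i)) \<inter> return_set T1 x (fst (e i)) \<subseteq> return_set (direct_sum T1 T2) (x,y) V"
      using ds_return[of "fst p" "snd p" V T1 x T2 y] \<open>fst p \<times> snd p \<subseteq> V\<close> by auto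
    then show "return_set (direct_sum T1 T2) (x,y) V \<in> F"
      using y ff unfolding furstenberg_family_def by blast
  qed
qed

theorem proposition4p1:
  fixes F :: "nat set set"
    and T1 :: "'a::{real_vector, polish_space} \<Rightarrow> 'a"
    and T2 :: "'b::{real_vector, polish_space} \<Rightarrow> 'b"
  assumes "furstenberg_family F"
    and "polish_tvs TYPE('a)" and "polish_tvs TYPE('b)"
    and "bounded_operator T1" and "bounded_operator T2"
  shows "(F_hypercyclic F T1 \<and> hereditarily_F_hypercyclic F T2
           \<longrightarrow> F_hypercyclic F (direct_sum T1 T2)) \<and>
         (hereditarily_F_hypercyclic F T1 \<and> hereditarily_F_hypercyclic F T2
           \<longrightarrow> hereditarily_F_hypercyclic F (direct_sum T1 T2))"
proof (intro conjI impI)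
  assume h: "F_hypercyclic F T1 \<and> hereditarily_F_hypercyclic F T2"
  have a: "F_hypercyclic F T1" using h by (rule conjunct1)
  have b: "hereditarily_F_hypercyclic F T2" using h by (rule conjunct2)
  show "F_hypercyclic F (direct_sum T1 T2)" by (rule part1[OF assms(1) a b])
next
  assume h: "hereditarily_F_hypercyclic F T1 \<and> hereditarily_F_hypercyclic F T2"
  have a: "hereditarily_F_hypercyclic F T1" using h by (rule conjunct1)
  have b: "hereditarily_F_hypercyclic F T2" using h by (rule conjunct2)
  show "hereditarily_F_hypercyclic F (direct_sum T1 T2)" by (rule part2[OF assms(1) a b])
qed

end
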